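(* Let $\mathcal{X},\mathcal{Y}$ be Hilbert spaces, $F:\mathcal{D}(F)\subset\mathcal{X}\to\mathcal{Y}$ an operator and $y\in\mathcal{Y}$. Assume: (a) $\Theta:\mathcal{X}\to(-\infty,\infty]$ is proper, weakly lower semi-continuous and $p$-convex for some $p>1$, i.e. there is $c_0>0$ with $D_\xi\Theta(\bar x,x)\ge c_0\|x-\bar x\|^p$ for all $\bar x\in\mathcal{D}(\Theta)$, $x\in\mathcal{D}(\partial\Theta)$, $\xi\in\partial\Theta(x)$; (b) there are $\rho>0$, $x_0\in\mathcal{X}$, $\xi_0\in\partial\Theta(x_0)$ with $B_{2\rho}(x_0)\subset\mathcal{D}(F)$, and $F(x)=y$ has a solution $x^*\in\mathcal{D}(\Theta)$ with $D_{\xi_0}\Theta(x^*,x_0)\le c_0\rho^p$; (c) $F$ is continuous and weakly closed on $\mathcal{D}(F)$; (d) there is a family of bounded linear operators $\{L(x):\mathcal{X}\to\mathcal{Y}\}_{x\in B_{2\rho}(x_0)\cap\mathcal{D}(\Theta)}$, with $x\mapsto L(x)$ continuous on $B_{2\rho}(x_0)\cap\mathcal{D}(\Theta)$, a number $0\le\eta<1$ with $\|F(x)-F(\bar x)-L(\bar x)(x-\bar x)\|<\eta\|F(x)-F(\bar x)\|$ for all $x,\bar x\in B_{2\rho}(x_0)\cap\mathcal{D}(\Theta)$, and $C_0>0$ with $\|L(x)\|\le C_0$ for all $x\in B_{2\rho}(x_0)$. Let $(\xi(t),x(t))$, $t\ge0$, be the solution of the noise-free problem $$\frac{d\xi(t)}{dt}=-L(x(t))^*(F(x(t))-y),\quad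 x(t)=\nabla\Theta^*(\xi(t)),\qquad \xi(0)=\xi_0,\ x(0)=x_0.$$ Then there exists a solution $\bar x\in B_{2\rho}(x_0)\cap\mathcal{D}(\Theta)$ of $F(x)=y$ such that $\lim_{T\to\infty}\|x(T)-\bar x\|=0$.
   Context: $\partial\Theta$ is the subdifferential, $\mathcal{D}(\Theta)=\{x:\Theta(x)<\infty\}$, $\mathcal{D}(\partial\Theta)=\{x\in\mathcal{D}(\Theta):\partial\Theta(x)\ne\emptyset\}$, and $D_\xi\Theta(\bar x,x)=\Theta(\bar x)-\Theta(x)-\langle\xi,\bar x-x\rangle$ for $\xi\in\partial\Theta(x)$ is the Bregman distance. $\Theta^*$ is the Legendre–Fenchel conjugate of $\Theta$, $L(x)^*$ the adjoint, and $B_{2\rho}(x_0)$ the closed ball of radius $2\rho$ about $x_0$. *)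

theory Defs
  imports "HOL-Analysis.Analysis" "HOL-Library.Extended_Real"
begin

definition weak_conv :: "(nat \<Rightarrow> 'a::real_inner) \<Rightarrow> 'a \<Rightarrow> bool" where
  "weak_conv xs x \<longleftrightarrow> (\<forall>v. (\<lambda>n. inner (xs n) v) \<longlonglongrightarrow> inner x v)"

definition edom :: "('a \<Rightarrow> ereal) \<Rightarrow> 'a set" where
  "edom \<Theta> = {x. \<Theta> x < \<infinity>}"

definition proper_fun :: "('a \<Rightarrow> ereal) \<Rightarrow> bool" where
  "proper_fun \<Theta> \<longleftrightarrow> (\<forall>x. \<Theta> x \<noteq> -\<infinity>) \<and> (\<exists>x. \<Theta> x < \<infinity>)"

definition weakly_lsc :: "('a::real_inner \<Rightarrow> ereal) \<Rightarrow> bool" where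
  "weakly_lsc \<Theta> \<longleftrightarrow>
     (\<forall>xs x. weak_conv xs x \<longrightarrow> \<Theta> x \<le> liminf (\<lambda>n. \<Theta> (xs n)))"

definition subdiff :: "('a::real_inner \<Rightarrow> ereal) \<Rightarrow> 'a \<Rightarrow> 'a set" where
  "subdiff \<Theta> x = {\<xi>. \<Theta> x < \<infinity> \<and>
      (\<forall>z. \<Theta> x + ereal (inner \<xi> (z - x)) \<le> \<Theta> z)}"

definition dom_subdiff :: "('a::real_inner \<Rightarrow> ereal) \<Rightarrow> 'a set" where
  "dom_subdiff \<Theta> = {x \<in> edom \<Theta>. subdiff \<Theta> x \<noteq> {}}"

text \<open>Bregman distance D_xi Theta(xb, x); used only when both values are finite.\<close>
definition bregman :: "('a::real_inner \<Rightarrow> ereal) \<Rightarrow> 'a \<Rightarrow> 'a \<Rightarrow> 'a \<Rightarrow> real" where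
  "bregman \<Theta> \<xi> xb x = real_of_ereal (\<Theta> xb) - real_of_ereal (\<Theta> x) - inner \<xi> (xb - x)"

definition fconj :: "('a::real_inner \<Rightarrow> ereal) \<Rightarrow> 'a \<Rightarrow> ereal" where
  "fconj \<Theta> \<xi> = (SUP z. ereal (inner \<xi> z) - \<Theta> z)"

definition p_convex :: "('a::real_inner \<Rightarrow> ereal) \<Rightarrow> real \<Rightarrow> real \<Rightarrow> bool" where
  "p_convex \<Theta> p c0 \<longleftrightarrow>
     (\<forall>xb\<in>edom \<Theta>. \<forall>x\<in>dom_subdiff \<Theta>. \<forall>\<xi>\<in>subdiff \<Theta> x.
        bregman \<Theta> \<xi> xb x \<ge> c0 * norm (x - xb) powr p)"

definition weakly_closed_op :: "'a::real_inner set \<Rightarrow> ('a \<Rightarrow> 'b::real_inner) \<Rightarrow> bool" where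
  "weakly_closed_op D F \<longleftrightarrow>
     (\<forall>xs x v. (\<forall>n. xs n \<in> D) \<and> weak_conv xs x \<and> weak_conv (\<lambda>n. F (xs n)) v
         \<longrightarrow> x \<in> D \<and> F x = v)"

end

theory Submission
  imports Defs
begin

lemma parallelogram_norm:
  fixes u v :: "'a::real_inner"
  shows "norm (u + v)^2 + norm (u - v)^2 = 2 * norm u ^2 + 2 * norm v ^2"
  by (simp add: power2_norm_eq_inner inner_add_left inner_add_right inner_diff_left inner_diff_right inner_commute)

lemma riesz_repr:
  fixes g :: "'a::{real_inner,complete_space} \<Rightarrow> real"
  assumes bl: "bounded_linear g"
  shows "\<exists>v. \<forall>z. g z = inner v z"
proof (cases "\<forall>z. g z = 0")
  case True
  then show ?thesis by (intro exI[of _ 0]) simp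
next
  case False
  then obtain a where ga: "g a \<noteq> 0" by auto
  interpret g: bounded_linear g by fact
  define N where "N = {z. g z = 0}"
  have clN: "closed N" unfolding N_def
    by (intro closed_Collect_eq continuous_intros g.continuous_on continuous_on_id)
  have N_add: "u + v \<in> N" if "u \<in> N" "v \<in> N" for u v using that by (simp add: N_def g.add)
  have N_scale: "c *\<^sub>R u \<in> N" if "u \<in> N" for u c using that by (simp add: N_def g.scale)
  have N0: "0 \<in> N" by (simp add: N_def)
  define d where "d = Inf ((\<lambda>n. norm (a - n)) ` N)"
  have bdd: "bdd_below ((\<lambda>n. norm (a - n)) ` N)" by (intro bdd_belowI[of _ 0]) auto
  have d_le: "d \<le> norm (a - n)" if "n \<in> N" for n
    unfolding d_def using bdd that by (intro cInf_lower) auto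
  have d_ge: "d \<ge> 0" unfolding d_def using N0 by (intro cInf_greatest) auto
  have "\<exists>n\<in>N. norm (a - n)^2 < d^2 + 1 / (real k + 1)" for k :: nat
  proof -
    have "d < sqrt (d^2 + 1 / (real k + 1))"
    proof -
      have "sqrt (d^2) < sqrt (d^2 + 1 / (real k + 1))"
        by (intro real_sqrt_less_mono) (simp add: add_pos_nonneg)
      then show ?thesis using d_ge by simp
    qed
    then obtain n where "n \<in> N" "norm (a - n) < sqrt (d^2 + 1 / (real k + 1))"
      using cInf_lessD[of "(\<lambda>n. norm (a - n)) ` N"] N0 unfolding d_def by blast
    then show ?thesis
    proof (intro bexI)
      have "norm (a - n)^2 < (sqrt (d^2 + 1 / (real k + 1)))^2"
        using \<open>norm (a - n) < _\<close> by (intro power_strict_mono) auto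
      also have "\<dots> = d^2 + 1 / (real k + 1)" by (intro real_sqrt_pow2) (simp add: add_nonneg_nonneg)
      finally show "norm (a - n)^2 < d^2 + 1 / (real k + 1)" .
    qed blast
  qed
  then obtain ns where ns: "\<And>k. ns k \<in> N" "\<And>k. norm (a - ns k)^2 < d^2 + 1 / (real k + 1)"
    by metis
  have cau_bound: "norm (ns k - ns j)^2 \<le> 2 / (real k + 1) + 2 / (real j + 1)" for k j
  proof -
    have mid: "(1/2) *\<^sub>R (ns k + ns j) \<in> N" using ns by (intro N_scale N_add) auto
    have "2 * d \<le> 2 * norm (a - (1/2) *\<^sub>R (ns k + ns j))" using d_le[OF mid] by simp
    also have "\<dots> = norm ((a - ns k) + (a - ns j))"
    proof -
      have "(a - ns k) + (a - ns j) = 2 *\<^sub>R (a - (1/2) *\<^sub>R (ns k + ns j))"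
        by (simp add: algebra_simps scaleR_2)
      then show ?thesis by simp
    qed
    finally have h1: "(2 * d)^2 \<le> norm ((a - ns k) + (a - ns j))^2"
      using d_ge by (intro power_mono) auto
    note h2 = parallelogram_norm[of "a - ns k" "a - ns j"]
    have "(a - ns k) - (a - ns j) = ns j - ns k" by simp
    then have "norm ((a - ns k) - (a - ns j)) = norm (ns k - ns j)" by (simp add: norm_minus_commute)
    then show ?thesis using h1 h2 ns(2)[of k] ns(2)[of j] by (simp add: power_mult_distrib)
  qed
  have "Cauchy ns"
  proof (rule metric_CauchyI)
    fix e :: real assume e: "e > 0"
    obtain M :: nat where M: "4 / e^2 < real M + 1"
      by (metis reals_Archimedean2 add.commute less_add_same_cancel2 zero_less_one
          less_trans of_nat_Suc)
    have "dist (ns k) (ns j) < e" if "k \<ge> M" "j \<ge> M" for k j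
    proof -
      have e2: "e^2 > 0" using e by simp
      have "2 / (real k + 1) \<le> 2 / (real M + 1)" "2 / (real j + 1) \<le> 2 / (real M + 1)"
        using that by (auto intro!: divide_left_mono)
      moreover have "4 / (real M + 1) < e^2"
        using M e2 by (simp add: field_simps)
      ultimately have "norm (ns k - ns j)^2 < e^2" using cau_bound[of k j] by linarith
      then have "norm (ns k - ns j) < e" using e by (simp add: power_less_imp_less_base)
      then show ?thesis by (simp add: dist_norm)
    qed
    then show "\<exists>M. \<forall>m\<ge>M. \<forall>n\<ge>M. dist (ns m) (ns n) < e" by blast
  qed
  then obtain w where ns_lim: "ns \<longlonglongrightarrow> w" using convergent_eq_Cauchy by blast
  have wN: "w \<in> N" using clN ns ns_lim by (meson closed_sequentially)
  have "norm (a - w)^2 \<le> d^2"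
  proof (rule tendsto_le[OF _ _ _])
    show "((\<lambda>k. d^2 + 1 / (real k + 1)) \<longlongrightarrow> d^2) sequentially"
      using tendsto_add[OF tendsto_const[of "d^2"] LIMSEQ_inverse_real_of_nat] by (simp add: inverse_eq_divide add.commute)
    show "((\<lambda>k. norm (a - ns k)^2) \<longlongrightarrow> norm (a - w)^2) sequentially"
      by (intro tendsto_intros ns_lim)
    show "\<forall>\<^sub>F k in sequentially. norm (a - ns k)^2 \<le> d^2 + 1 / (real k + 1)"
      using ns(2) by (simp add: less_imp_le)
  qed simp
  then have w_min: "norm (a - w) \<le> norm (a - n)" if "n \<in> N" for n
    using d_le[OF that] d_ge by (meson norm_ge_zero power2_le_imp_le order_trans)
  define u where "u = a - w"
  have orth: "inner u n = 0" if "n \<in> N" for n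
  proof -
    define s where "s = inner u n"
    define m where "m = norm n ^2"
    define t where "t = s / (m + 1)"
    have m0: "m \<ge> 0" by (simp add: m_def)
    have "w + t *\<^sub>R n \<in> N" using wN that by (intro N_add N_scale)
    then have "norm u \<le> norm (u - t *\<^sub>R n)" using w_min unfolding u_def by (simp add: algebra_simps)
    then have "norm u ^2 \<le> norm (u - t *\<^sub>R n)^2" by (simp add: power_mono)
    also have "\<dots> = norm u ^2 - 2 * t * s + t^2 * m"
      unfolding m_def s_def power2_norm_eq_inner
      by (simp add: inner_diff_left inner_diff_right inner_commute algebra_simps power2_eq_square)
    finally have "2 * t * s \<le> t^2 * m" by simp
    moreover have st: "s = t * (m + 1)" using m0 by (simp add: t_def)
    ultimately have "t * t * (m + 2) \<le> 0" by (simp add: algebra_simps power2_eq_square)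
    then have "t * t \<le> 0" using m0
      by (metis add_nonneg_pos mult_le_0_iff not_le zero_less_numeral)
    then have "t = 0" by (simp add: mult_le_0_iff) (metis mult_le_0_iff not_le order_antisym_conv zero_le_square)
    then show ?thesis using st s_def by simp
  qed
  have gu: "g u = g a" unfolding u_def using wN by (simp add: g.diff N_def)
  then have u0: "u \<noteq> 0" using ga by auto
  have "g z = inner ((g u / norm u ^2) *\<^sub>R u) z" for z
  proof -
    have "z - (g z / g u) *\<^sub>R u \<in> N" using ga gu by (simp add: N_def g.diff g.scale)
    then have "inner u (z - (g z / g u) *\<^sub>R u) = 0" by (rule orth)
    then have "inner u z = (g z / g u) * norm u ^2"
      by (simp add: inner_diff_right power2_norm_eq_inner)
    then show ?thesis using u0 ga gu by (simp add: field_simps)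
  qed
  then show ?thesis by blast
qed

lemma adjoint_bl:
  fixes T :: "'a::{real_inner,complete_space} \<Rightarrow> 'b::real_inner"
  assumes "bounded_linear T"
  shows "inner (T x) y = inner x (adjoint T y)"
proof -
  interpret T: bounded_linear T by fact
  have "\<forall>y. \<exists>v. \<forall>x. inner (T x) y = inner v x"
  proof
    fix y
    have "bounded_linear (\<lambda>x. inner (T x) y)"
      using bounded_linear_compose[OF bounded_linear_inner_left assms] .
    then show "\<exists>v. \<forall>x. inner (T x) y = inner v x" by (rule riesz_repr)
  qed
  then obtain h where h: "\<forall>y x. inner (T x) y = inner (h y) x" by metis
  have "adjoint T = h" by (rule adjoint_unique) (metis h inner_commute)
  then show ?thesis using h by (simp add: inner_commute)
qed

lemma powr_growth_bound:
  fixes a c p :: real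
  assumes a: "a \<ge> 0" and c: "c > 0" and p: "p > 1"
  shows "\<exists>M. \<forall>s\<ge>0. a * s - c * s powr p \<le> M"
proof -
  define R where "R = max 1 ((a / c) powr (1 / (p - 1)))"
  have R1: "R \<ge> 1" by (simp add: R_def)
  have "a * s - c * s powr p \<le> a * R" if s: "s \<ge> 0" for s
  proof (cases "s \<le> R")
    case True
    then have "a * s \<le> a * R" using a by (intro mult_left_mono) auto
    moreover have "c * s powr p \<ge> 0" using c by simp
    ultimately show ?thesis by linarith
  next
    case False
    then have sR: "s > R" by simp
    then have s0: "s > 0" using R1 by simp
    have "(a / c) powr (1 / (p - 1)) \<le> s" using sR unfolding R_def by simp
    then have "((a / c) powr (1 / (p - 1))) powr (p - 1) \<le> s powr (p - 1)"
      using p by (intro powr_mono2) auto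
    also have "((a / c) powr (1 / (p - 1))) powr (p - 1) = (if a = 0 then 0 else a / c)"
      using p a c by (auto simp: powr_powr)
    finally have "a / c \<le> s powr (p - 1)" using s0 by (cases "a = 0") auto
    then have "a \<le> c * s powr (p - 1)" using c by (simp add: field_simps)
    then have "a * s \<le> c * s powr (p - 1) * s" using s0 by (intro mult_right_mono) auto
    also have "c * s powr (p - 1) * s = c * s powr p"
      using s0 by (simp add: powr_diff field_simps powr_one_gt_zero_iff)
    finally have "a * s \<le> c * s powr p" .
    moreover have "a * R \<ge> 0" using a R1 by simp
    ultimately show ?thesis by linarith
  qed
  then show ?thesis by blast
qed

locale flowloc =
  fixes \<Theta> :: "'x::{real_inner,complete_space} \<Rightarrow> ereal"
    and F :: "'x \<Rightarrow> 'y::{real_inner,complete_space}"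
    and DF :: "'x set" and y :: 'y
    and p c0 \<rho> \<eta> C0 :: real and x0 \<xi>0 xstar :: 'x
    and L :: "'x \<Rightarrow> ('x \<Rightarrow>\<^sub>L 'y)"
    and \<xi> x :: "real \<Rightarrow> 'x"
  assumes a_proper: "proper_fun \<Theta>"
    and a_wlsc: "weakly_lsc \<Theta>"
    and a_p: "p > 1" and a_c0: "c0 > 0"
    and a_pconv: "p_convex \<Theta> p c0"
    and b_rho: "\<rho> > 0"
    and b_xi0: "\<xi>0 \<in> subdiff \<Theta> x0"
    and b_ball: "cball x0 (2 * \<rho>) \<subseteq> DF"
    and b_sol: "xstar \<in> DF" "xstar \<in> edom \<Theta>" "F xstar = y"
    and b_breg: "bregman \<Theta> \<xi>0 xstar x0 \<le> c0 * \<rho> powr p"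
    and c_cont: "continuous_on DF F"
    and d_eta: "0 \<le> \<eta>" "\<eta> < 1"
    and d_tcc: "\<And>x' xb. x' \<in> cball x0 (2 * \<rho>) \<inter> edom \<Theta> \<Longrightarrow>
                  xb \<in> cball x0 (2 * \<rho>) \<inter> edom \<Theta> \<Longrightarrow>
                  norm (F x' - F xb - L xb (x' - xb)) \<le> \<eta> * norm (F x' - F xb)"
    and flow_init: "\<xi> 0 = \<xi>0" "x 0 = x0"
    and flow_eq: "\<And>t. t \<ge> 0 \<Longrightarrow>
          (\<xi> has_vector_derivative
             (- adjoint (blinfun_apply (L (x t))) (F (x t) - y))) (at t within {0..})"
    and flow_grad: "\<And>t. t \<ge> 0 \<Longrightarrow>
          ((\<lambda>\<zeta>. real_of_ereal (fconj \<Theta> \<zeta>)) has_derivative (\<lambda>h. inner (x t) h)) (at (\<xi> t))"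
begin

definition "fc \<zeta> = real_of_ereal (fconj \<Theta> \<zeta>)"
definition "th0 = real_of_ereal (\<Theta> x0)"

lemma not_minf: "\<Theta> z \<noteq> -\<infinity>"
  using a_proper unfolding proper_fun_def by auto

lemma x0_fin: "\<Theta> x0 = ereal th0"
proof -
  have "\<Theta> x0 < \<infinity>" using b_xi0 unfolding subdiff_def by auto
  then show ?thesis unfolding th0_def using not_minf[of x0] by (cases "\<Theta> x0") auto
qed

lemma x0_dom: "x0 \<in> dom_subdiff \<Theta>"
  using b_xi0 x0_fin unfolding dom_subdiff_def edom_def by auto

lemma fin_cases:
  obtains v where "\<Theta> z = ereal v" | "\<Theta> z = \<infinity>"
  using not_minf[of z] by (cases "\<Theta> z") auto

lemma theta_lower:
  "\<Theta> z \<ge> ereal (th0 + inner \<xi>0 (z - x0) + c0 * norm (z - x0) powr p)"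
proof (cases rule: fin_cases[of z])
  case (1 v)
  then have "z \<in> edom \<Theta>" unfolding edom_def by auto
  then have "bregman \<Theta> \<xi>0 z x0 \<ge> c0 * norm (x0 - z) powr p"
    using a_pconv x0_dom b_xi0 unfolding p_convex_def by blast
  then show ?thesis using 1 x0_fin by (simp add: bregman_def norm_minus_commute)
next
  case 2
  then show ?thesis by simp
qed

lemma conj_upper: "\<exists>M. \<forall>z. ereal (inner \<zeta> z) - \<Theta> z \<le> ereal M"
proof -
  obtain M where M: "\<And>s. s \<ge> 0 \<Longrightarrow> norm (\<zeta> - \<xi>0) * s - c0 * s powr p \<le> M"
    using powr_growth_bound[of "norm (\<zeta> - \<xi>0)" c0 p] a_c0 a_p by auto
  have "ereal (inner \<zeta> z) - \<Theta> z \<le> ereal (M + inner \<zeta> x0 - th0)" for z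
  proof (cases rule: fin_cases[of z])
    case (1 v)
    have low: "v \<ge> th0 + inner \<xi>0 (z - x0) + c0 * norm (z - x0) powr p"
      using theta_lower[of z] 1 by simp
    have "inner \<zeta> z - v \<le> inner (\<zeta> - \<xi>0) (z - x0) - c0 * norm (z - x0) powr p + inner \<zeta> x0 - th0"
      using low by (simp add: inner_diff_left inner_diff_right)
    also have "\<dots> \<le> norm (\<zeta> - \<xi>0) * norm (z - x0) - c0 * norm (z - x0) powr p + inner \<zeta> x0 - th0"
      using Cauchy_Schwarz_ineq2[of "\<zeta> - \<xi>0" "z - x0"] by simp
    also have "\<dots> \<le> M + inner \<zeta> x0 - th0" using M[of "norm (z - x0)"] by simp
    finally show ?thesis using 1 by simp
  next
    case 2
    then show ?thesis by simp
  qed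
  then show ?thesis by blast
qed

lemma conj_fin: "fconj \<Theta> \<zeta> = ereal (fc \<zeta>)"
proof -
  obtain M where M: "\<And>z. ereal (inner \<zeta> z) - \<Theta> z \<le> ereal M" using conj_upper by blast
  have up: "fconj \<Theta> \<zeta> \<le> ereal M" unfolding fconj_def by (intro SUP_least M)
  obtain z1 where z1: "\<Theta> z1 < \<infinity>" using a_proper unfolding proper_fun_def by auto
  then obtain v where v: "\<Theta> z1 = ereal v" using fin_cases[of z1] by force
  have "ereal (inner \<zeta> z1) - \<Theta> z1 \<le> fconj \<Theta> \<zeta>" unfolding fconj_def by (intro SUP_upper) auto
  then have lo: "ereal (inner \<zeta> z1 - v) \<le> fconj \<Theta> \<zeta>" using v by simp
  show ?thesis unfolding fc_def using up lo by (intro ereal_real'[symmetric]) auto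
qed

lemma conj_ge: "\<Theta> z = ereal v \<Longrightarrow> inner \<zeta> z - v \<le> fc \<zeta>"
proof -
  assume v: "\<Theta> z = ereal v"
  have "ereal (inner \<zeta> z) - \<Theta> z \<le> fconj \<Theta> \<zeta>" unfolding fconj_def by (intro SUP_upper) auto
  then show ?thesis using v conj_fin[of \<zeta>] by simp
qed

lemma conj_approx:
  assumes "e > 0"
  shows "\<exists>z v. \<Theta> z = ereal v \<and> inner \<zeta> z - v > fc \<zeta> - e"
proof -
  have "ereal (fc \<zeta> - e) < fconj \<Theta> \<zeta>" using conj_fin[of \<zeta>] assms by simp
  then obtain z where z: "ereal (fc \<zeta> - e) < ereal (inner \<zeta> z) - \<Theta> z"
    unfolding fconj_def less_SUP_iff by auto
  show ?thesis
  proof (cases rule: fin_cases[of z])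
    case (1 v)
    then show ?thesis using z by auto
  next
    case 2
    then show ?thesis using z by simp
  qed
qed

end

context flowloc begin

lemma grad_fenchel:
  assumes D: "(fc has_derivative (\<lambda>h. inner v h)) (at \<zeta>)"
  shows "\<Theta> v = ereal (inner \<zeta> v - fc \<zeta>) \<and> \<zeta> \<in> subdiff \<Theta> v"
proof -
  have "\<forall>n::nat. \<exists>z w. \<Theta> z = ereal w \<and> inner \<zeta> z - w > fc \<zeta> - 1 / (real n + 1)"
    using conj_approx by simp
  then obtain zs vs where zs: "\<And>n. \<Theta> (zs n) = ereal (vs n)"
    "\<And>n. inner \<zeta> (zs n) - vs n > fc \<zeta> - 1 / (real n + 1)"
    by metis
  have conv: "zs \<longlonglongrightarrow> v"
  proof (rule LIMSEQ_I)
    fix e :: real assume e: "e > 0"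
    obtain d where d: "d > 0" and H: "\<And>y. norm (y - \<zeta>) < d \<Longrightarrow>
        norm (fc y - fc \<zeta> - inner v (y - \<zeta>)) \<le> (e / 2) * norm (y - \<zeta>)"
      using D[unfolded has_derivative_at_alt] e by (meson half_gt_zero)
    obtain N :: nat where N: "inverse (real (Suc N)) < e * d / 4"
      using reals_Archimedean[of "e * d / 4"] e d by auto
    have "norm (zs n - v) < e" if n: "n \<ge> N" for n
    proof (cases "zs n = v")
      case True
      then show ?thesis using e by simp
    next
      case False
      define q where "q = norm (zs n - v)"
      have q0: "q > 0" using False by (simp add: q_def)
      define h where "h = (d / 2 / q) *\<^sub>R (zs n - v)"
      have nh: "norm h = d / 2" using q0 d by (simp add: h_def q_def)
      have "norm ((\<zeta> + h) - \<zeta>) < d" using nh d by simp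
      from H[OF this] have H1: "fc (\<zeta> + h) - fc \<zeta> - inner v h \<le> e / 2 * (d / 2)"
        using nh by (smt (verit) abs_le_D1 add_diff_cancel_left' real_norm_def)
      have cg: "inner (\<zeta> + h) (zs n) - vs n \<le> fc (\<zeta> + h)" by (rule conj_ge[OF zs(1)])
      have ih: "inner h (zs n - v) = d / 2 * q"
        using q0 by (simp add: h_def q_def power2_norm_eq_inner[symmetric] power2_eq_square)
      have nn: "1 / (real n + 1) \<le> inverse (real (Suc N))"
        using n by (simp add: inverse_eq_divide frac_le)
      have e1: "inner (\<zeta> + h) (zs n) = inner \<zeta> (zs n) + inner h (zs n)" by (simp add: inner_add_left)
      have e2: "inner h (zs n - v) = inner h (zs n) - inner v h" by (simp add: inner_diff_right inner_commute)
      have "d / 2 * q < e / 2 * (d / 2) + e * d / 4"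
        using H1 cg ih zs(2)[of n] nn N e1 e2 by linarith
      then have "d / 2 * q < d / 2 * e" by (simp add: field_simps)
      then show ?thesis using d by (simp add: q_def)
    qed
    then show "\<exists>N. \<forall>n\<ge>N. norm (zs n - v) < e" by blast
  qed
  have wc: "weak_conv zs v" unfolding weak_conv_def
    by (intro allI tendsto_inner conv tendsto_const)
  have "\<Theta> v \<le> liminf (\<lambda>n. \<Theta> (zs n))" using a_wlsc wc unfolding weakly_lsc_def by blast
  also have "\<dots> \<le> liminf (\<lambda>n. ereal (inner \<zeta> (zs n) - fc \<zeta> + 1 / (real n + 1)))"
    using zs by (intro Liminf_mono always_eventually allI) (smt (verit) ereal_less_eq(3))
  also have "\<dots> = ereal (inner \<zeta> v - fc \<zeta>)"
  proof (intro lim_imp_Liminf)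
    have "(\<lambda>n. inner \<zeta> (zs n) - fc \<zeta> + 1 / (real n + 1)) \<longlonglongrightarrow> inner \<zeta> v - fc \<zeta> + 0"
    proof -
      have lim1: "(\<lambda>n. 1 / (real n + 1)) \<longlonglongrightarrow> 0"
        using LIMSEQ_inverse_real_of_nat by (simp add: inverse_eq_divide add.commute)
      show ?thesis
        by (intro tendsto_add[OF tendsto_diff[OF tendsto_inner[OF tendsto_const conv] tendsto_const] lim1])
    qed
    then show "(\<lambda>n. ereal (inner \<zeta> (zs n) - fc \<zeta> + 1 / (real n + 1))) \<longlonglongrightarrow> ereal (inner \<zeta> v - fc \<zeta>)"
      by (simp add: tendsto_ereal)
  qed simp
  finally have le: "\<Theta> v \<le> ereal (inner \<zeta> v - fc \<zeta>)" .
  then obtain w where w: "\<Theta> v = ereal w" using fin_cases[of v] by force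
  have "inner \<zeta> v - w \<le> fc \<zeta>" by (rule conj_ge[OF w])
  then have eq: "\<Theta> v = ereal (inner \<zeta> v - fc \<zeta>)" using le w by simp
  have "\<zeta> \<in> subdiff \<Theta> v" unfolding subdiff_def
  proof (intro CollectI conjI allI)
    show "\<Theta> v < \<infinity>" using eq by simp
    fix z
    show "\<Theta> v + ereal (inner \<zeta> (z - v)) \<le> \<Theta> z"
    proof (cases rule: fin_cases[of z])
      case (1 u)
      have "inner \<zeta> z - u \<le> fc \<zeta>" by (rule conj_ge[OF 1])
      then show ?thesis using eq 1 by (simp add: inner_diff_right)
    next
      case 2
      then show ?thesis by simp
    qed
  qed
  then show ?thesis using eq by simp
qed

definition "th t = inner (\<xi> t) (x t) - fc (\<xi> t)"

lemma fc_eq: "(\<lambda>\<zeta>. real_of_ereal (fconj \<Theta> \<zeta>)) = fc" by (simp add: fc_def fun_eq_iff)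

lemma fc_deriv: "t \<ge> 0 \<Longrightarrow> (fc has_derivative (\<lambda>h. inner (x t) h)) (at (\<xi> t))"
  using flow_grad fc_eq by metis

lemma flow_fin: "t \<ge> 0 \<Longrightarrow> \<Theta> (x t) = ereal (th t)"
  using grad_fenchel[OF fc_deriv] by (simp add: th_def)

lemma flow_sub: "t \<ge> 0 \<Longrightarrow> \<xi> t \<in> subdiff \<Theta> (x t)"
  using grad_fenchel[OF fc_deriv] by simp

lemma flow_edom: "t \<ge> 0 \<Longrightarrow> x t \<in> edom \<Theta>"
  using flow_fin by (simp add: edom_def)

lemma flow_dom: "t \<ge> 0 \<Longrightarrow> x t \<in> dom_subdiff \<Theta>"
  using flow_edom flow_sub by (auto simp: dom_subdiff_def)

lemma pconv_flow:
  assumes s: "s \<ge> 0" and z: "\<Theta> z = ereal v"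
  shows "c0 * norm (x s - z) powr p \<le> v + fc (\<xi> s) - inner (\<xi> s) z"
proof -
  have "z \<in> edom \<Theta>" using z by (simp add: edom_def)
  then have "bregman \<Theta> (\<xi> s) z (x s) \<ge> c0 * norm (x s - z) powr p"
    using a_pconv flow_dom[OF s] flow_sub[OF s] unfolding p_convex_def by blast
  then show ?thesis using z flow_fin[OF s]
    by (simp add: bregman_def th_def inner_diff_right)
qed

end

lemma powr_root_bound:
  fixes u E c p :: real
  assumes "u \<ge> 0" "c > 0" "p > 0" "c * u powr p \<le> E"
  shows "u \<le> (E / c) powr (1 / p)"
proof -
  have "u powr p \<le> E / c" using assms by (simp add: field_simps)
  then have "(u powr p) powr (1 / p) \<le> (E / c) powr (1 / p)"
    using assms by (intro powr_mono2) auto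
  then show ?thesis using assms by (simp add: powr_powr)
qed

context flowloc begin

definition "r t = F (x t) - y"
definition "dxi t = - adjoint (blinfun_apply (L (x t))) (r t)"
definition "thstar = real_of_ereal (\<Theta> xstar)"
definition "Dv t = thstar + fc (\<xi> t) - inner (\<xi> t) xstar"
definition "Kc = 3 * (1 + \<eta>) / (1 - \<eta>)"

lemma xstar_fin: "\<Theta> xstar = ereal thstar"
  using b_sol(2) not_minf[of xstar] unfolding edom_def thstar_def by (cases "\<Theta> xstar") auto

lemma xi_deriv: "t \<ge> 0 \<Longrightarrow> (\<xi> has_vector_derivative dxi t) (at t within {0..})"
  using flow_eq by (simp add: dxi_def r_def)

lemma Dv_ge: "t \<ge> 0 \<Longrightarrow> c0 * norm (x t - xstar) powr p \<le> Dv t"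
  using pconv_flow[OF _ xstar_fin] by (simp add: Dv_def)

lemma Dv_nonneg: "t \<ge> 0 \<Longrightarrow> 0 \<le> Dv t"
proof -
  assume t: "t \<ge> 0"
  have "0 \<le> c0 * norm (x t - xstar) powr p" using a_c0 by simp
  then show ?thesis using Dv_ge[OF t] by linarith
qed

lemma th_0: "th 0 = th0"
  using flow_fin[of 0] x0_fin flow_init by simp

lemma Dv_0: "Dv 0 \<le> c0 * \<rho> powr p"
proof -
  have "Dv 0 = bregman \<Theta> \<xi>0 xstar x0"
    using th_0 flow_init xstar_fin x0_fin
    by (simp add: Dv_def bregman_def th_def thstar_def inner_diff_right)
  then show ?thesis using b_breg by simp
qed

lemma three_point:
  assumes "a \<ge> 0" "b \<ge> 0"
  shows "c0 * norm (x a - x b) powr p \<le> Dv a - Dv b + inner (\<xi> b - \<xi> a) (x b - xstar)"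
  using pconv_flow[OF assms(1) flow_fin[OF assms(2)]]
  by (simp add: Dv_def th_def inner_diff_left inner_diff_right inner_commute)

lemma x0_xstar: "norm (x0 - xstar) \<le> \<rho>"
proof -
  have "c0 * norm (x0 - xstar) powr p \<le> c0 * \<rho> powr p"
    using Dv_ge[of 0] Dv_0 flow_init by simp
  then have "norm (x0 - xstar) powr p \<le> \<rho> powr p" using a_c0 by simp
  show ?thesis
  proof (rule ccontr)
    assume "\<not> norm (x0 - xstar) \<le> \<rho>"
    then have "\<rho> powr p < norm (x0 - xstar) powr p"
      using a_p b_rho by (intro powr_less_mono2) auto
    then show False using \<open>norm (x0 - xstar) powr p \<le> \<rho> powr p\<close> by simp
  qed
qed

lemma xstar_ball: "xstar \<in> cball x0 (2 * \<rho>)"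
  using x0_xstar b_rho by (simp add: dist_norm)

lemma xi_cont: "continuous_on {0..} \<xi>"
  by (auto simp: continuous_on_eq_continuous_within intro: has_vector_derivative_continuous xi_deriv)

lemma x_mono_ineq:
  assumes "s \<ge> 0" "t \<ge> 0"
  shows "2 * c0 * norm (x s - x t) powr p \<le> norm (\<xi> s - \<xi> t) * norm (x s - x t)"
proof -
  have 1: "c0 * norm (x t - x s) powr p \<le> th s + fc (\<xi> t) - inner (\<xi> t) (x s)"
    by (rule pconv_flow[OF assms(2) flow_fin[OF assms(1)]])
  have 2: "c0 * norm (x s - x t) powr p \<le> th t + fc (\<xi> s) - inner (\<xi> s) (x t)"
    by (rule pconv_flow[OF assms(1) flow_fin[OF assms(2)]])
  have "th s + fc (\<xi> t) - inner (\<xi> t) (x s) + (th t + fc (\<xi> s) - inner (\<xi> s) (x t))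
      = inner (\<xi> s - \<xi> t) (x s - x t)"
    by (simp add: th_def inner_diff_left inner_diff_right inner_commute)
  also have "\<dots> \<le> norm (\<xi> s - \<xi> t) * norm (x s - x t)" by (rule norm_cauchy_schwarz)
  finally show ?thesis using 1 2 by (simp add: norm_minus_commute)
qed

lemma x_cont: "continuous_on {0..} x"
  unfolding continuous_on_eq_continuous_within
proof
  fix t :: real assume t: "t \<in> {0..}"
  show "continuous (at t within {0..}) x"
    unfolding continuous_within_eps_delta
  proof (intro allI impI)
    fix e :: real assume e: "e > 0"
    define e' where "e' = 2 * c0 * e powr (p - 1)"
    have e'0: "e' > 0" using e a_c0 by (simp add: e'_def)
    obtain d where d: "d > 0" and H: "\<And>s. s \<in> {0..} \<Longrightarrow> dist s t < d \<Longrightarrow> dist (\<xi> s) (\<xi> t) < e'"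
      using xi_cont t e'0 unfolding continuous_on_eq_continuous_within continuous_within_eps_delta
      by metis
    have "dist (x s) (x t) < e" if s: "s \<in> {0..}" "dist s t < d" for s
    proof (rule ccontr)
      assume "\<not> dist (x s) (x t) < e"
      then have qe: "norm (x s - x t) \<ge> e" by (simp add: dist_norm)
      define q where "q = norm (x s - x t)"
      have q0: "q > 0" using qe e unfolding q_def by linarith
      have "2 * c0 * q powr p \<le> norm (\<xi> s - \<xi> t) * q"
        using x_mono_ineq[of s t] s t by (simp add: q_def)
      moreover have "q powr p = q powr (p - 1) * q" using q0 by (simp add: powr_diff)
      ultimately have "2 * c0 * q powr (p - 1) \<le> norm (\<xi> s - \<xi> t)" using q0 by simp
      moreover have "e powr (p - 1) \<le> q powr (p - 1)"
        using qe e a_p by (intro powr_mono2) (auto simp: q_def)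
      then have "2 * c0 * e powr (p - 1) \<le> 2 * c0 * q powr (p - 1)" using a_c0
        by (intro mult_left_mono) auto
      ultimately have "e' \<le> norm (\<xi> s - \<xi> t)" unfolding e'_def by linarith
      then show False using H[OF s] by (simp add: dist_norm)
    qed
    then show "\<exists>d>0. \<forall>s\<in>{0..}. dist s t < d \<longrightarrow> dist (x s) (x t) < e" using d by blast
  qed
qed

lemma Dv_deriv:
  assumes t: "t \<ge> 0"
  shows "(Dv has_real_derivative inner (dxi t) (x t - xstar)) (at t within {0..})"
proof -
  have 1: "((fc \<circ> \<xi>) has_vector_derivative inner (x t) (dxi t)) (at t within {0..})"
    by (rule vector_derivative_diff_chain_within[OF xi_deriv[OF t]
          has_derivative_subset[OF fc_deriv[OF t] subset_UNIV]])
  have 2: "((\<lambda>s. inner (\<xi> s) xstar) has_vector_derivative inner (dxi t) xstar) (at t within {0..})"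
    by (rule bounded_linear.has_vector_derivative[OF bounded_linear_inner_left xi_deriv[OF t]])
  have "((\<lambda>s. thstar + (fc \<circ> \<xi>) s - inner (\<xi> s) xstar) has_vector_derivative
      (0 + inner (x t) (dxi t) - inner (dxi t) xstar)) (at t within {0..})"
    by (intro has_vector_derivative_diff has_vector_derivative_add has_vector_derivative_const 1 2)
  moreover have "(\<lambda>s. thstar + (fc \<circ> \<xi>) s - inner (\<xi> s) xstar) = Dv"
    by (simp add: Dv_def fun_eq_iff)
  moreover have "0 + inner (x t) (dxi t) - inner (dxi t) xstar = inner (dxi t) (x t - xstar)"
    by (simp add: inner_commute[of "dxi t"] inner_diff_left)
  ultimately show ?thesis by (simp add: has_real_derivative_iff_has_vector_derivative)
qed

lemma dxi_inner: "inner (dxi t) v = - inner (r t) (L (x t) v)"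
proof -
  have "inner (blinfun_apply (L (x t)) v) (r t) = inner v (adjoint (blinfun_apply (L (x t))) (r t))"
    by (rule adjoint_bl[OF blinfun.bounded_linear_right])
  then show ?thesis by (simp add: dxi_def inner_commute)
qed

lemma inB: "s \<ge> 0 \<Longrightarrow> x s \<in> cball x0 (2 * \<rho>) \<Longrightarrow> x s \<in> cball x0 (2 * \<rho>) \<inter> edom \<Theta>"
  using flow_edom by auto

lemma xstarB: "xstar \<in> cball x0 (2 * \<rho>) \<inter> edom \<Theta>"
  using xstar_ball b_sol by auto

lemma tcc_self:
  assumes s: "s \<ge> 0" "x s \<in> cball x0 (2 * \<rho>)"
  shows "norm (r s - L (x s) (x s - xstar)) \<le> \<eta> * norm (r s)"
proof -
  have "norm (F xstar - F (x s) - L (x s) (xstar - x s)) \<le> \<eta> * norm (F xstar - F (x s))"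
    by (rule d_tcc[OF xstarB inB[OF s]])
  moreover have "F xstar - F (x s) - L (x s) (xstar - x s) = - (r s - L (x s) (x s - xstar))"
    using b_sol(3) by (simp add: r_def blinfun.diff_right)
  moreover have "norm (F xstar - F (x s)) = norm (r s)"
    using b_sol(3) by (simp add: r_def norm_minus_commute)
  ultimately show ?thesis by (metis norm_minus_cancel)
qed

lemma tcc1:
  assumes s: "s \<ge> 0" "x s \<in> cball x0 (2 * \<rho>)"
  shows "inner (r s) (L (x s) (x s - xstar)) \<ge> (1 - \<eta>) * norm (r s)^2"
proof -
  define v where "v = L (x s) (x s - xstar)"
  have n: "norm (r s - v) \<le> \<eta> * norm (r s)" using tcc_self[OF s] by (simp add: v_def)
  have "inner (r s) v = inner (r s) (r s) - inner (r s) (r s - v)" by (simp add: inner_diff_right)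
  moreover have "inner (r s) (r s - v) \<le> norm (r s) * (\<eta> * norm (r s))"
    using norm_cauchy_schwarz[of "r s" "r s - v"] n
    by (meson norm_ge_zero mult_left_mono order_trans)
  ultimately show ?thesis by (simp add: v_def power2_norm_eq_inner[symmetric] algebra_simps power2_eq_square)
qed

lemma tcc2:
  assumes s: "s \<ge> 0" "x s \<in> cball x0 (2 * \<rho>)" and t: "t \<ge> 0" "x t \<in> cball x0 (2 * \<rho>)"
  shows "norm (L (x s) (x t - xstar)) \<le> (1 + \<eta>) * (norm (r t) + 2 * norm (r s))"
proof -
  define A where "A = L (x s) (x t - x s)"
  define B where "B = L (x s) (x s - xstar)"
  have h0: "norm (F (x t) - F (x s) - A) \<le> \<eta> * norm (F (x t) - F (x s))"
    unfolding A_def by (rule d_tcc[OF inB[OF t] inB[OF s]])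
  have eqD: "F (x t) - F (x s) = r t - r s" by (simp add: r_def)
  have h1: "norm (r t - r s - A) \<le> \<eta> * norm (r t - r s)" using h0 unfolding eqD .
  have h2: "norm A \<le> norm (r t - r s) + norm (r t - r s - A)"
    using norm_triangle_ineq4[of "r t - r s" "r t - r s - A"] by simp
  have h3: "norm (r t - r s) \<le> norm (r t) + norm (r s)" by (rule norm_triangle_ineq4)
  have "(1 + \<eta>) * norm (r t - r s) \<le> (1 + \<eta>) * (norm (r t) + norm (r s))"
    using d_eta h3 by (intro mult_left_mono) auto
  then have nA: "norm A \<le> (1 + \<eta>) * (norm (r t) + norm (r s))" using h1 h2 by (simp add: algebra_simps)
  have "norm (r s - B) \<le> \<eta> * norm (r s)" using tcc_self[OF s] by (simp add: B_def)
  moreover have "norm B \<le> norm (r s) + norm (r s - B)"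
    by (metis add.commute diff_add_cancel norm_minus_commute norm_triangle_ineq4 norm_triangle_sub)
  ultimately have nB: "norm B \<le> (1 + \<eta>) * norm (r s)" by (simp add: algebra_simps)
  have "L (x s) (x t - xstar) = A + B"
    by (simp add: A_def B_def blinfun.add_right[symmetric])
  then have "norm (L (x s) (x t - xstar)) \<le> norm A + norm B" by (simp add: norm_triangle_ineq)
  then show ?thesis using nA nB by (simp add: algebra_simps)
qed

end

lemma nonincr_interval:
  fixes g g' :: "real \<Rightarrow> real"
  assumes ab: "a \<le> b"
    and D: "\<And>s. a \<le> s \<Longrightarrow> s \<le> b \<Longrightarrow> (g has_real_derivative g' s) (at s within {a..b})"
    and neg: "\<And>s. a \<le> s \<Longrightarrow> s \<le> b \<Longrightarrow> g' s \<le> 0"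
  shows "g b \<le> g a"
proof (rule DERIV_nonpos_imp_decreasing_open[OF ab])
  show "continuous_on {a..b} g" by (rule DERIV_continuous_on[of _ _ g']) (use D in auto)
  fix s assume s: "a < s" "s < b"
  then have "at s within {a..b} = at s" by (intro at_within_interior) auto
  then show "\<exists>y. DERIV g s :> y \<and> y \<le> 0" using D[of s] neg[of s] s by auto
qed

context flowloc begin

lemma Dv_deriv_le:
  assumes "s \<ge> 0" "x s \<in> cball x0 (2 * \<rho>)"
  shows "inner (dxi s) (x s - xstar) \<le> - (1 - \<eta>) * norm (r s)^2"
proof -
  have "(\<eta> - 1) * norm (r s)^2 = - ((1 - \<eta>) * norm (r s)^2)" by (simp add: algebra_simps)
  then show ?thesis using tcc1[OF assms] dxi_inner[of s "x s - xstar"] by simp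
qed

lemma Dv_mono:
  assumes a: "0 \<le> a" "a \<le> b" and ball: "\<And>s. a \<le> s \<Longrightarrow> s \<le> b \<Longrightarrow> x s \<in> cball x0 (2 * \<rho>)"
  shows "Dv b \<le> Dv a"
proof (rule nonincr_interval[OF a(2)])
  fix s assume s: "a \<le> s" "s \<le> b"
  show "(Dv has_real_derivative inner (dxi s) (x s - xstar)) (at s within {a..b})"
    using Dv_deriv[of s] s a by (auto intro: DERIV_subset)
  have "(1 - \<eta>) * norm (r s)^2 \<ge> 0" using d_eta by simp
  then have "- (1 - \<eta>) * norm (r s)^2 \<le> 0" by linarith
  then show "inner (dxi s) (x s - xstar) \<le> 0" using Dv_deriv_le[of s] ball[OF s] s a by force
qed

lemma Kc_prop: "Kc * (1 - \<eta>) = 3 * (1 + \<eta>)" "Kc \<ge> 0"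
  using d_eta by (auto simp: Kc_def)

lemma G_bound:
  assumes a: "0 \<le> a" "a \<le> b"
    and ball: "\<And>s. a \<le> s \<Longrightarrow> s \<le> b \<Longrightarrow> x s \<in> cball x0 (2 * \<rho>)"
    and tau: "\<tau> \<ge> 0" "x \<tau> \<in> cball x0 (2 * \<rho>)"
    and c: "c \<ge> 0"
    and rc: "\<And>s. a \<le> s \<Longrightarrow> s \<le> b \<Longrightarrow> norm (r \<tau>) * norm (r s) \<le> norm (r s)^2 + c"
  shows "\<bar>inner (\<xi> b - \<xi> a) (x \<tau> - xstar)\<bar> \<le> Kc * (Dv a - Dv b) + (1 + \<eta>) * c * (b - a)"
proof -
  define w where "w = x \<tau> - xstar"
  have main: "\<sigma> * inner (\<xi> b - \<xi> a) w \<le> Kc * (Dv a - Dv b) + (1 + \<eta>) * c * (b - a)"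
    if sig: "\<bar>\<sigma>\<bar> = 1" for \<sigma> :: real
  proof -
    define g where "g s = \<sigma> * inner (\<xi> s) w + Kc * Dv s - (1 + \<eta>) * c * s" for s
    define g' where "g' s = \<sigma> * inner (dxi s) w + Kc * inner (dxi s) (x s - xstar) - (1 + \<eta>) * c * 1" for s
    have "g b \<le> g a"
    proof (rule nonincr_interval[OF a(2), of g g'])
      fix s assume s: "a \<le> s" "s \<le> b"
      then have s0: "s \<ge> 0" using a by simp
      have d1: "((\<lambda>s. inner (\<xi> s) w) has_real_derivative inner (dxi s) w) (at s within {0..})"
        using bounded_linear.has_vector_derivative[OF bounded_linear_inner_left xi_deriv[OF s0]]
        by (simp add: has_real_derivative_iff_has_vector_derivative)
      have "(g has_real_derivative g' s) (at s within {0..})"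
        unfolding g_def[abs_def] g'_def
        by (intro DERIV_diff DERIV_add DERIV_cmult d1 Dv_deriv[OF s0] DERIV_ident)
      then show "(g has_real_derivative g' s) (at s within {a..b})"
        using a by (auto intro: DERIV_subset)
      have xs: "x s \<in> cball x0 (2 * \<rho>)" using ball[OF s] .
      have "\<bar>inner (dxi s) w\<bar> = \<bar>inner (r s) (L (x s) w)\<bar>" by (simp add: dxi_inner)
      also have "\<dots> \<le> norm (r s) * norm (L (x s) w)" by (rule Cauchy_Schwarz_ineq2)
      also have "\<dots> \<le> norm (r s) * ((1 + \<eta>) * (norm (r \<tau>) + 2 * norm (r s)))"
        using tcc2[OF s0 xs tau] by (intro mult_left_mono) (auto simp: w_def)
      also have "\<dots> = (1 + \<eta>) * (norm (r \<tau>) * norm (r s) + 2 * norm (r s)^2)"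
        by (simp add: algebra_simps power2_eq_square)
      also have "\<dots> \<le> (1 + \<eta>) * (3 * norm (r s)^2 + c)"
        using rc[OF s] d_eta by (intro mult_left_mono) auto
      finally have i1: "\<bar>inner (dxi s) w\<bar> \<le> (1 + \<eta>) * (3 * norm (r s)^2 + c)" .
      have "\<sigma> * inner (dxi s) w \<le> \<bar>\<sigma> * inner (dxi s) w\<bar>" by (rule abs_ge_self)
      also have "\<dots> = \<bar>inner (dxi s) w\<bar>" by (simp add: abs_mult sig)
      finally have i0: "\<sigma> * inner (dxi s) w \<le> \<bar>inner (dxi s) w\<bar>" .
      moreover have "Kc * inner (dxi s) (x s - xstar) \<le> Kc * (- (1 - \<eta>) * norm (r s)^2)"
        using Dv_deriv_le[OF s0 xs] Kc_prop by (intro mult_left_mono) auto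
      moreover have "Kc * (- (1 - \<eta>) * norm (r s)^2) = - ((Kc * (1 - \<eta>)) * norm (r s)^2)"
        by (metis mult.assoc mult_minus_left mult_minus_right)
      ultimately have i2: "Kc * inner (dxi s) (x s - xstar) \<le> - (3 * (1 + \<eta>) * norm (r s)^2)"
        using Kc_prop(1) by simp
      have i3: "(1 + \<eta>) * (3 * norm (r s)^2 + c) = 3 * (1 + \<eta>) * norm (r s)^2 + (1 + \<eta>) * c"
        by (simp add: algebra_simps)
      show "g' s \<le> 0" using i0 i1 i2 i3 unfolding g'_def mult_1_right by linarith
    qed
    moreover have "\<sigma> * inner (\<xi> b - \<xi> a) w = \<sigma> * inner (\<xi> b) w - \<sigma> * inner (\<xi> a) w"
      by (simp add: inner_diff_left right_diff_distrib)
    moreover have "Kc * (Dv a - Dv b) = Kc * Dv a - Kc * Dv b" by (simp add: right_diff_distrib)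
    moreover have "(1 + \<eta>) * c * (b - a) = (1 + \<eta>) * c * b - (1 + \<eta>) * c * a"
      by (simp add: right_diff_distrib)
    ultimately show ?thesis unfolding g_def by linarith
  qed
  have "inner (\<xi> b - \<xi> a) w \<le> Kc * (Dv a - Dv b) + (1 + \<eta>) * c * (b - a)" using main[of 1] by simp
  moreover have "- inner (\<xi> b - \<xi> a) w \<le> Kc * (Dv a - Dv b) + (1 + \<eta>) * c * (b - a)" using main[of "-1"] by simp
  ultimately show ?thesis unfolding w_def by linarith
qed

end

context flowloc begin

lemma x_cont_at:
  assumes "t \<ge> 0" "e > 0"
  shows "\<exists>d>0. \<forall>s\<ge>0. \<bar>s - t\<bar> < d \<longrightarrow> dist (x s) (x t) < e"
proof -
  have "continuous (at t within {0..}) x"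
    using x_cont assms(1) by (simp add: continuous_on_eq_continuous_within)
  then obtain d where "d > 0" "\<forall>s\<in>{0..}. dist s t < d \<longrightarrow> dist (x s) (x t) < e"
    using assms(2) unfolding continuous_within_eps_delta by metis
  then show ?thesis by (auto simp: dist_real_def)
qed

lemma powr_pos_eq0:
  assumes "c0 * norm v powr p \<le> 0"
  shows "v = 0"
proof (rule ccontr)
  assume "v \<noteq> 0"
  then have "norm v powr p > 0" by simp
  then have "c0 * norm v powr p > 0" using a_c0 by simp
  then show False using assms by linarith
qed

lemma invariance:
  assumes t1: "t1 \<ge> 0"
  shows "x t1 \<in> cball x0 (2 * \<rho>)"
proof (rule ccontr)
  assume nt1: "x t1 \<notin> cball x0 (2 * \<rho>)"
  define S where "S = {s. 0 \<le> s \<and> s \<le> t1 \<and> x s \<notin> cball x0 (2 * \<rho>)}"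
  define ts where "ts = Inf S"
  have t1S: "t1 \<in> S" using t1 nt1 by (simp add: S_def)
  have bdd: "bdd_below S" by (rule bdd_belowI[of _ 0]) (simp add: S_def)
  have ts_le: "ts \<le> s" if "s \<in> S" for s unfolding ts_def by (rule cInf_lower[OF that bdd])
  have ts0: "ts \<ge> 0" unfolding ts_def using t1S by (intro cInf_greatest) (auto simp: S_def)
  have ts1: "ts \<le> t1" using ts_le[OF t1S] .
  have before: "x s \<in> cball x0 (2 * \<rho>)" if "0 \<le> s" "s < ts" for s
  proof (rule ccontr)
    assume "x s \<notin> cball x0 (2 * \<rho>)"
    then have "s \<in> S" using that ts1 by (simp add: S_def)
    then show False using ts_le[of s] that by simp
  qed
  have x00: "x 0 \<in> cball x0 (2 * \<rho>)" using flow_init b_rho by simp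
  have at_ts: "x ts \<in> cball x0 (2 * \<rho>)"
  proof (rule ccontr)
    assume nts: "x ts \<notin> cball x0 (2 * \<rho>)"
    then have tsp: "ts > 0" using x00 ts0 by (cases "ts = 0") auto
    define e where "e = dist x0 (x ts) - 2 * \<rho>"
    have e0: "e > 0" using nts by (simp add: e_def)
    obtain d where d: "d > 0" and H: "\<And>s. s \<ge> 0 \<Longrightarrow> \<bar>s - ts\<bar> < d \<Longrightarrow> dist (x s) (x ts) < e"
      using x_cont_at[OF ts0 e0] by blast
    define s where "s = max 0 (ts - d / 2)"
    have s: "s \<ge> 0" "s < ts" "\<bar>s - ts\<bar> < d" using tsp d by (auto simp: s_def)
    have "dist x0 (x ts) \<le> dist x0 (x s) + dist (x s) (x ts)" by (rule dist_triangle)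
    also have "\<dots> < 2 * \<rho> + e" using before[OF s(1,2)] H[OF s(1,3)] by simp
    finally show False by (simp add: e_def)
  qed
  have ball_ts: "x s \<in> cball x0 (2 * \<rho>)" if "0 \<le> s" "s \<le> ts" for s
    using before at_ts that by (cases "s = ts") auto
  have Dts: "Dv ts \<le> Dv 0" by (rule Dv_mono[OF _ ts0 ball_ts]) auto
  have interior: "dist x0 (x ts) < 2 * \<rho>"
  proof (cases "Dv ts < Dv 0")
    case True
    have "c0 * norm (x ts - xstar) powr p < c0 * \<rho> powr p"
      using Dv_ge[OF ts0] True Dv_0 by linarith
    then have "norm (x ts - xstar) powr p < \<rho> powr p" using a_c0 by simp
    then have "norm (x ts - xstar) < \<rho>"
    proof -
      assume lt: "norm (x ts - xstar) powr p < \<rho> powr p"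
      show ?thesis
      proof (rule ccontr)
        assume "\<not> norm (x ts - xstar) < \<rho>"
        then have "\<rho> powr p \<le> norm (x ts - xstar) powr p"
          using a_p b_rho by (intro powr_mono2) auto
        then show False using lt by simp
      qed
    qed
    moreover have "dist x0 (x ts) \<le> norm (x0 - xstar) + norm (x ts - xstar)"
      using dist_triangle[of x0 "x ts" xstar] by (simp add: dist_norm norm_minus_commute)
    ultimately show ?thesis using x0_xstar by linarith
  next
    case False
    then have eq: "Dv ts = Dv 0" using Dts by simp
    show ?thesis
    proof (cases "ts = 0")
      case True
      then show ?thesis using flow_init b_rho by simp
    next
      case False
      then have tsp: "ts > 0" using ts0 by simp
      have const: "Dv s = Dv 0" if "0 \<le> s" "s \<le> ts" for s
      proof -
        have b1: "x sa \<in> cball x0 (2 * \<rho>)" if "0 \<le> sa" "sa \<le> s" for sa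
          using ball_ts that \<open>s \<le> ts\<close> order_trans by blast
        have b2: "x sa \<in> cball x0 (2 * \<rho>)" if "s \<le> sa" "sa \<le> ts" for sa
          using ball_ts that \<open>0 \<le> s\<close> order_trans by blast
        have "Dv s \<le> Dv 0" by (rule Dv_mono[OF order_refl \<open>0 \<le> s\<close> b1])
        moreover have "Dv ts \<le> Dv s" by (rule Dv_mono[OF \<open>0 \<le> s\<close> \<open>s \<le> ts\<close> b2])
        ultimately show ?thesis using eq by simp
      qed
      have d1: "(Dv has_real_derivative inner (dxi ts) (x ts - xstar)) (at ts within {0..ts})"
        using Dv_deriv[OF ts0] by (rule DERIV_subset) (simp add: subset_eq)
      have "((\<lambda>_. Dv 0) has_real_derivative 0) (at ts within {0..ts})" by simp
      then have d2: "(Dv has_real_derivative 0) (at ts within {0..ts})"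
      proof (rule has_field_derivative_transform_within[of _ _ _ _ 1])
        show "(0::real) < 1" "ts \<in> {0..ts}" using ts0 by auto
        fix s assume "s \<in> {0..ts}"
        then show "Dv 0 = Dv s" using const[of s] by simp
      qed
      have "inner (dxi ts) (x ts - xstar) = 0"
        using vector_derivative_unique_within_closed_interval[of 0 ts ts Dv]
          d1 d2 tsp ts0 by (simp add: has_real_derivative_iff_has_vector_derivative)
      then have "- (1 - \<eta>) * norm (r ts)^2 \<ge> 0" using Dv_deriv_le[OF ts0 at_ts] by linarith
      then have "(1 - \<eta>) * norm (r ts)^2 \<le> 0" by linarith
      then have "norm (r ts)^2 \<le> 0" using d_eta by (simp add: mult_le_0_iff)
      then have r0: "r ts = 0" by simp
      have "\<bar>inner (\<xi> ts - \<xi> 0) (x ts - xstar)\<bar> \<le> Kc * (Dv 0 - Dv ts) + (1 + \<eta>) * 0 * (ts - 0)"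
        by (rule G_bound[OF order_refl ts0 ball_ts ts0 at_ts order_refl]) (auto simp: r0)
      then have "inner (\<xi> ts - \<xi> 0) (x ts - xstar) \<le> 0" using eq by simp
      then have "c0 * norm (x 0 - x ts) powr p \<le> 0"
        using three_point[OF order_refl ts0] eq by simp
      then have "x 0 - x ts = 0" by (rule powr_pos_eq0)
      then show ?thesis using flow_init b_rho by simp
    qed
  qed
  define e where "e = 2 * \<rho> - dist x0 (x ts)"
  have e0: "e > 0" using interior by (simp add: e_def)
  obtain d where d: "d > 0" and H: "\<And>s. s \<ge> 0 \<Longrightarrow> \<bar>s - ts\<bar> < d \<Longrightarrow> dist (x s) (x ts) < e"
    using x_cont_at[OF ts0 e0] by blast
  have "Inf S < ts + d" using d by (simp add: ts_def)
  then obtain s where sS: "s \<in> S" and s_lt: "s < ts + d"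
    using cInf_lessD[of S "ts + d"] t1S by blast
  have "s \<ge> ts" using ts_le[OF sS] .
  then have "\<bar>s - ts\<bar> < d" using s_lt by simp
  moreover have s0: "s \<ge> 0" using sS by (simp add: S_def)
  ultimately have "dist (x s) (x ts) < e" using H by blast
  then have "dist x0 (x s) < 2 * \<rho>"
    using dist_triangle[of x0 "x s" "x ts"] dist_commute[of "x ts" "x s"] unfolding e_def by linarith
  then show False using sS by (simp add: S_def)
qed

end

context flowloc begin

lemma Dv_mono2: "0 \<le> a \<Longrightarrow> a \<le> b \<Longrightarrow> Dv b \<le> Dv a"
  by (rule Dv_mono, assumption, assumption, rule invariance, linarith)

lemma G2:
  assumes a: "0 \<le> a" "a \<le> b" and tau: "\<tau> \<ge> 0" and c: "c \<ge> 0"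
    and rc: "\<And>s. a \<le> s \<Longrightarrow> s \<le> b \<Longrightarrow> norm (r \<tau>) * norm (r s) \<le> norm (r s)^2 + c"
  shows "\<bar>inner (\<xi> b - \<xi> a) (x \<tau> - xstar)\<bar> \<le> Kc * (Dv a - Dv b) + (1 + \<eta>) * c * (b - a)"
  by (rule G_bound[OF a _ tau invariance[OF tau] c rc], rule invariance) (use a in linarith)

lemma r_cont: "continuous_on {0..} (\<lambda>t. norm (r t))"
proof -
  have "continuous_on {0..} (\<lambda>t. F (x t))"
    by (rule continuous_on_compose2[OF c_cont x_cont]) (use invariance b_ball in auto)
  then show ?thesis unfolding r_def by (intro continuous_intros)
qed

lemma log_arg:
  assumes T: "T \<ge> 1"
  shows "\<exists>\<tau>\<ge>T. \<tau> * norm (r \<tau>)^2 \<le> 1"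
proof (rule ccontr)
  assume "\<not> ?thesis"
  then have big: "\<And>\<tau>. \<tau> \<ge> T \<Longrightarrow> \<tau> * norm (r \<tau>)^2 > 1" by force
  define h where "h s = Dv s + (1 - \<eta>) * ln s" for s
  have hmono: "h b \<le> h T" if b: "b \<ge> T" for b
  proof (rule nonincr_interval[OF b, of h "\<lambda>s. inner (dxi s) (x s - xstar) + (1 - \<eta>) * (1 / s)"])
    fix s assume s: "T \<le> s" "s \<le> b"
    then have s0: "s > 0" using T by simp
    have "(Dv has_real_derivative inner (dxi s) (x s - xstar)) (at s within {T..b})"
      using Dv_deriv[OF less_imp_le[OF s0]] by (rule DERIV_subset) (use T in auto)
    moreover have "(ln has_real_derivative 1 / s) (at s within {T..b})"
      using DERIV_ln_divide[OF s0] by (rule DERIV_subset) auto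
    ultimately show "(h has_real_derivative inner (dxi s) (x s - xstar) + (1 - \<eta>) * (1 / s)) (at s within {T..b})"
      unfolding h_def[abs_def] by (intro DERIV_add DERIV_cmult)
    have "s * norm (r s)^2 > 1" using big s by simp
    then have "1 / s < norm (r s)^2" using s0 by (simp add: field_simps)
    then have "(1 - \<eta>) * (1 / s) \<le> (1 - \<eta>) * norm (r s)^2" using d_eta by (intro mult_left_mono) auto
    moreover have "inner (dxi s) (x s - xstar) \<le> - (1 - \<eta>) * norm (r s)^2"
      by (rule Dv_deriv_le[OF _ invariance]) (use s0 in auto)
    moreover have "- (1 - \<eta>) * norm (r s)^2 = - ((1 - \<eta>) * norm (r s)^2)" by (rule mult_minus_left)
    ultimately show "inner (dxi s) (x s - xstar) + (1 - \<eta>) * (1 / s) \<le> 0" by linarith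
  qed
  define b where "b = T * exp ((Dv T + 1) / (1 - \<eta>))"
  have T0: "T > 0" using T by simp
  have "exp ((Dv T + 1) / (1 - \<eta>)) \<ge> 1"
    using Dv_nonneg[of T] T d_eta by (simp add: one_le_exp_iff)
  then have bT: "b \<ge> T" unfolding b_def using T0 by (simp add: mult_le_cancel_left1)
  have lnb: "ln b = ln T + (Dv T + 1) / (1 - \<eta>)" unfolding b_def using T0 by (simp add: ln_mult)
  have "Dv b + (1 - \<eta>) * ln b \<le> Dv T + (1 - \<eta>) * ln T" using hmono[OF bT] by (simp add: h_def)
  moreover have "(1 - \<eta>) * ln b = (1 - \<eta>) * ln T + (Dv T + 1)"
  proof -
    have "(1 - \<eta>) * ((Dv T + 1) / (1 - \<eta>)) = Dv T + 1" using d_eta by simp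
    then show ?thesis by (simp add: lnb distrib_left)
  qed
  ultimately have "Dv b \<le> -1" by simp
  then show False using Dv_nonneg[of b] bT T by simp
qed

definition "Dinf = Inf (Dv ` {0..})"

lemma Dinf_le: "t \<ge> 0 \<Longrightarrow> Dinf \<le> Dv t"
  unfolding Dinf_def by (rule cInf_lower) (auto intro: bdd_belowI[of _ 0] Dv_nonneg)

lemma Dinf_approx: "e > 0 \<Longrightarrow> \<exists>T\<ge>0. Dv T < Dinf + e"
proof -
  assume e: "e > 0"
  have "Inf (Dv ` {0..}) < Dinf + e" using e by (simp add: Dinf_def)
  then obtain v where "v \<in> Dv ` {0..}" "v < Dinf + e"
    using cInf_lessD[of "Dv ` {0..}"] by blast
  then show ?thesis by auto
qed

lemma cauchy_bound:
  assumes ts: "0 \<le> t" "t \<le> s"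
  shows "norm (x t - x s) \<le> 2 * ((1 + Kc) * (Dv t - Dv s) / c0) powr (1 / p)"
proof -
  obtain \<tau> where tau: "\<tau> \<in> {t..s}" and mn: "\<And>u. u \<in> {t..s} \<Longrightarrow> norm (r \<tau>) \<le> norm (r u)"
    using continuous_attains_inf[of "{t..s}" "\<lambda>u. norm (r u)"]
      continuous_on_subset[OF r_cont, of "{t..s}"] ts by auto
  have t0: "\<tau> \<ge> 0" using tau ts by simp
  define E where "E = (1 + Kc) * (Dv t - Dv s)"
  have K0: "Kc \<ge> 0" using Kc_prop by simp
  have Dts: "Dv \<tau> \<le> Dv t" "Dv s \<le> Dv \<tau>" using tau ts by (auto intro: Dv_mono2)
  have G1: "\<bar>inner (\<xi> \<tau> - \<xi> t) (x \<tau> - xstar)\<bar> \<le> Kc * (Dv t - Dv \<tau>) + (1 + \<eta>) * 0 * (\<tau> - t)"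
  proof (rule G2)
    fix u assume u: "t \<le> u" "u \<le> \<tau>"
    then have "norm (r \<tau>) \<le> norm (r u)" using mn tau by auto
    then have "norm (r \<tau>) * norm (r u) \<le> norm (r u) * norm (r u)" by (intro mult_right_mono) auto
    then show "norm (r \<tau>) * norm (r u) \<le> norm (r u)^2 + 0" by (simp add: power2_eq_square)
  qed (use ts tau in auto)
  have G2': "\<bar>inner (\<xi> s - \<xi> \<tau>) (x \<tau> - xstar)\<bar> \<le> Kc * (Dv \<tau> - Dv s) + (1 + \<eta>) * 0 * (s - \<tau>)"
  proof (rule G2)
    fix u assume u: "\<tau> \<le> u" "u \<le> s"
    then have "norm (r \<tau>) \<le> norm (r u)" using mn tau by auto
    then have "norm (r \<tau>) * norm (r u) \<le> norm (r u) * norm (r u)" by (intro mult_right_mono) auto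
    then show "norm (r \<tau>) * norm (r u) \<le> norm (r u)^2 + 0" by (simp add: power2_eq_square)
  qed (use ts tau in auto)
  have b1: "c0 * norm (x t - x \<tau>) powr p \<le> E"
  proof -
    have "c0 * norm (x t - x \<tau>) powr p \<le> Dv t - Dv \<tau> + inner (\<xi> \<tau> - \<xi> t) (x \<tau> - xstar)"
      by (rule three_point) (use ts t0 in auto)
    also have "\<dots> \<le> (Dv t - Dv \<tau>) + Kc * (Dv t - Dv \<tau>)" using G1 by simp
    also have "\<dots> = (1 + Kc) * (Dv t - Dv \<tau>)" by (simp add: algebra_simps)
    also have "\<dots> \<le> E" unfolding E_def using K0 Dts by (intro mult_left_mono) auto
    finally show ?thesis .
  qed
  have b2: "c0 * norm (x s - x \<tau>) powr p \<le> E"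
  proof -
    have "c0 * norm (x s - x \<tau>) powr p \<le> Dv s - Dv \<tau> + inner (\<xi> \<tau> - \<xi> s) (x \<tau> - xstar)"
      by (rule three_point) (use ts t0 in auto)
    also have "inner (\<xi> \<tau> - \<xi> s) (x \<tau> - xstar) = - inner (\<xi> s - \<xi> \<tau>) (x \<tau> - xstar)"
      by (simp add: inner_diff_left)
    also have "Dv s - Dv \<tau> + - inner (\<xi> s - \<xi> \<tau>) (x \<tau> - xstar) \<le> Kc * (Dv \<tau> - Dv s)"
      using G2' Dts by simp
    also have "\<dots> \<le> (1 + Kc) * (Dv \<tau> - Dv s)" using Dts by (simp add: algebra_simps)
    also have "\<dots> \<le> E" unfolding E_def using K0 Dts by (intro mult_left_mono) auto
    finally show ?thesis .
  qed
  have n1: "norm (x t - x \<tau>) \<le> (E / c0) powr (1 / p)"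
    by (rule powr_root_bound[OF norm_ge_zero a_c0 _ b1]) (use a_p in simp)
  have n2: "norm (x s - x \<tau>) \<le> (E / c0) powr (1 / p)"
    by (rule powr_root_bound[OF norm_ge_zero a_c0 _ b2]) (use a_p in simp)
  have "norm (x t - x s) \<le> norm (x t - x \<tau>) + norm (x s - x \<tau>)"
    using norm_triangle_ineq4[of "x t - x \<tau>" "x s - x \<tau>"] by simp
  then show ?thesis using n1 n2 unfolding E_def by simp
qed

lemma cauchy_crit:
  assumes e: "e > 0"
  shows "\<exists>T\<ge>0. \<forall>t s. T \<le> t \<longrightarrow> T \<le> s \<longrightarrow> norm (x t - x s) < e"
proof -
  define \<delta> where "\<delta> = c0 * (e / 3) powr p / (1 + Kc)"
  have K0: "Kc \<ge> 0" using Kc_prop by simp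
  have d0: "\<delta> > 0" using e a_c0 K0 by (simp add: \<delta>_def)
  obtain T where T: "T \<ge> 0" "Dv T < Dinf + \<delta>" using Dinf_approx[OF d0] by blast
  have main: "norm (x t - x s) < e" if ts: "T \<le> t" "t \<le> s" for t s
  proof -
    have "Dv t - Dv s \<le> Dv T - Dinf"
      using Dv_mono2[of T t] Dinf_le[of s] ts T by simp
    then have lt: "Dv t - Dv s < \<delta>" using T by simp
    have ge: "Dv t - Dv s \<ge> 0" using Dv_mono2[of t s] ts T by simp
    have "(1 + Kc) * (Dv t - Dv s) / c0 \<le> (e / 3) powr p"
    proof -
      have "(1 + Kc) * (Dv t - Dv s) \<le> (1 + Kc) * \<delta>" using lt K0 by (intro mult_left_mono) auto
      also have "(1 + Kc) * \<delta> = c0 * (e / 3) powr p" using K0 by (simp add: \<delta>_def)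
      finally show ?thesis using a_c0 by (simp add: field_simps)
    qed
    then have "((1 + Kc) * (Dv t - Dv s) / c0) powr (1 / p) \<le> ((e / 3) powr p) powr (1 / p)"
      using ge K0 a_c0 a_p by (intro powr_mono2) auto
    also have "((e / 3) powr p) powr (1 / p) = e / 3" using e a_p by (simp add: powr_powr)
    finally have "2 * ((1 + Kc) * (Dv t - Dv s) / c0) powr (1 / p) \<le> 2 * (e / 3)" by simp
    then show ?thesis using cauchy_bound[of t s] ts T e by simp
  qed
  have "norm (x t - x s) < e" if "T \<le> t" "T \<le> s" for t s
  proof (cases "t \<le> s")
    case True
    then show ?thesis using main that by simp
  next
    case False
    then show ?thesis using main[of s t] that by (simp add: norm_minus_commute)
  qed
  then show ?thesis using T by blast
qed

end

context flowloc begin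

lemma th_bound:
  assumes t: "\<tau> \<ge> 0" and tr: "\<tau> * norm (r \<tau>)^2 \<le> 1"
  shows "th \<tau> \<le> thstar + norm \<xi>0 * (3 * \<rho>) + Kc * Dv 0 + (1 + \<eta>) / 4"
proof -
  have "Dv \<tau> \<ge> 0" using Dv_nonneg[OF t] .
  then have a1: "th \<tau> \<le> thstar + inner (\<xi> \<tau>) (x \<tau> - xstar)"
    by (simp add: Dv_def th_def inner_diff_right)
  have a2: "inner (\<xi> \<tau>) (x \<tau> - xstar) = inner \<xi>0 (x \<tau> - xstar) + inner (\<xi> \<tau> - \<xi> 0) (x \<tau> - xstar)"
    using flow_init by (simp add: inner_diff_left)
  have "norm (x \<tau> - xstar) \<le> norm (x \<tau> - x0) + norm (x0 - xstar)"
    using norm_triangle_ineq[of "x \<tau> - x0" "x0 - xstar"] by simp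
  moreover have "norm (x \<tau> - x0) \<le> 2 * \<rho>" using invariance[OF t] by (simp add: dist_norm norm_minus_commute)
  ultimately have "norm (x \<tau> - xstar) \<le> 3 * \<rho>" using x0_xstar by simp
  then have "norm \<xi>0 * norm (x \<tau> - xstar) \<le> norm \<xi>0 * (3 * \<rho>)" by (intro mult_left_mono) auto
  then have a3: "inner \<xi>0 (x \<tau> - xstar) \<le> norm \<xi>0 * (3 * \<rho>)"
    using norm_cauchy_schwarz[of \<xi>0 "x \<tau> - xstar"] by simp
  have G: "\<bar>inner (\<xi> \<tau> - \<xi> 0) (x \<tau> - xstar)\<bar> \<le> Kc * (Dv 0 - Dv \<tau>) + (1 + \<eta>) * (norm (r \<tau>)^2 / 4) * (\<tau> - 0)"
  proof (rule G2)
    fix s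
    have "0 \<le> (norm (r s) - norm (r \<tau>) / 2)^2" by simp
    then show "norm (r \<tau>) * norm (r s) \<le> norm (r s)^2 + norm (r \<tau>)^2 / 4"
      by (simp add: power2_eq_square algebra_simps)
  qed (use t in auto)
  have "Kc * (Dv 0 - Dv \<tau>) \<le> Kc * Dv 0" using Kc_prop Dv_nonneg[OF t] by (simp add: algebra_simps)
  moreover have "(1 + \<eta>) * (norm (r \<tau>)^2 / 4) * (\<tau> - 0) = (1 + \<eta>) / 4 * (\<tau> * norm (r \<tau>)^2)"
    by (simp add: algebra_simps)
  moreover have "(1 + \<eta>) / 4 * (\<tau> * norm (r \<tau>)^2) \<le> (1 + \<eta>) / 4 * 1"
    using tr d_eta by (intro mult_left_mono) auto
  ultimately have "inner (\<xi> \<tau> - \<xi> 0) (x \<tau> - xstar) \<le> Kc * Dv 0 + (1 + \<eta>) / 4"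
    using G by linarith
  then show ?thesis using a1 a2 a3 by linarith
qed

lemma main_result:
  "\<exists>xbar \<in> cball x0 (2 * \<rho>) \<inter> edom \<Theta>. F xbar = y \<and>
           ((\<lambda>T. norm (x T - xbar)) \<longlongrightarrow> 0) at_top"
proof -
  have "Cauchy (\<lambda>n. x (real n))"
  proof (rule metric_CauchyI)
    fix e :: real assume e: "e > 0"
    obtain T where T: "T \<ge> 0" "\<And>t s. T \<le> t \<Longrightarrow> T \<le> s \<Longrightarrow> norm (x t - x s) < e"
      using cauchy_crit[OF e] by blast
    have "dist (x (real m)) (x (real n)) < e" if "m \<ge> nat \<lceil>T\<rceil>" "n \<ge> nat \<lceil>T\<rceil>" for m n
    proof -
      have "real m \<ge> T" "real n \<ge> T" using that by linarith+
      then show ?thesis using T by (simp add: dist_norm)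
    qed
    then show "\<exists>M. \<forall>m\<ge>M. \<forall>n\<ge>M. dist (x (real m)) (x (real n)) < e" by blast
  qed
  then obtain xbar where xs: "(\<lambda>n. x (real n)) \<longlonglongrightarrow> xbar" using convergent_eq_Cauchy by blast
  have lim: "(x \<longlongrightarrow> xbar) at_top"
    unfolding tendsto_iff
  proof (intro allI impI)
    fix e :: real assume e: "e > 0"
    obtain T where T: "T \<ge> 0" "\<And>t s. T \<le> t \<Longrightarrow> T \<le> s \<Longrightarrow> norm (x t - x s) < e / 2"
      using cauchy_crit[of "e / 2"] e by auto
    obtain N where N: "\<And>n. n \<ge> N \<Longrightarrow> norm (x (real n) - xbar) < e / 2"
      using xs e unfolding LIMSEQ_iff by (meson half_gt_zero)
    have "dist (x t) xbar < e" if t: "t \<ge> T" for t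
    proof -
      define n where "n = max N (nat \<lceil>T\<rceil>)"
      have "real n \<ge> T" unfolding n_def by linarith
      then have "norm (x t - x (real n)) < e / 2" using T t by simp
      moreover have "norm (x (real n) - xbar) < e / 2" using N by (simp add: n_def)
      moreover have "norm (x t - xbar) \<le> norm (x t - x (real n)) + norm (x (real n) - xbar)"
        using norm_triangle_ineq[of "x t - x (real n)" "x (real n) - xbar"] by simp
      ultimately show ?thesis by (simp add: dist_norm)
    qed
    then show "\<forall>\<^sub>F t in at_top. dist (x t) xbar < e"
      unfolding eventually_at_top_linorder by blast
  qed
  have normlim: "((\<lambda>T. norm (x T - xbar)) \<longlongrightarrow> 0) at_top"
    using tendsto_diff[OF lim tendsto_const[of xbar]] by (simp add: tendsto_norm_zero_iff)
  have xb_ball: "xbar \<in> cball x0 (2 * \<rho>)"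
    using closed_sequentially[OF closed_cball _ xs] invariance by simp
  have "\<forall>n::nat. \<exists>\<tau>\<ge>real n + 1. \<tau> * norm (r \<tau>)^2 \<le> 1" using log_arg by simp
  then obtain tau where tau: "\<And>n. tau n \<ge> real n + 1" "\<And>n. tau n * norm (r (tau n))^2 \<le> 1"
    by metis
  have tau0: "tau n \<ge> 0" for n using tau(1)[of n] by simp
  have tau_lim: "filterlim tau at_top sequentially"
  proof (rule filterlim_at_top_mono[OF filterlim_real_sequentially])
    have "\<forall>n. real n \<le> tau n" using tau(1) by (metis add_le_same_cancel1 le_add_same_cancel1 order_trans zero_le_one)
    then show "\<forall>\<^sub>F n in sequentially. real n \<le> tau n" by (rule always_eventually)
  qed
  have xt: "(\<lambda>n. x (tau n)) \<longlonglongrightarrow> xbar" by (rule filterlim_compose[OF lim tau_lim])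
  have rsq: "(\<lambda>n. norm (r (tau n))^2) \<longlonglongrightarrow> 0"
  proof (rule tendsto_sandwich[of "\<lambda>_. 0" _ _ "\<lambda>n. 1 / (real n + 1)"])
    show "\<forall>\<^sub>F n in sequentially. 0 \<le> norm (r (tau n))^2" by simp
    have "norm (r (tau n))^2 \<le> 1 / (real n + 1)" for n
    proof -
      have "tau n > 0" using tau(1)[of n] by simp
      then have "norm (r (tau n))^2 \<le> 1 / tau n" using tau(2)[of n] by (simp add: field_simps)
      also have "\<dots> \<le> 1 / (real n + 1)" using tau(1)[of n] by (intro divide_left_mono) auto
      finally show ?thesis .
    qed
    then show "\<forall>\<^sub>F n in sequentially. norm (r (tau n))^2 \<le> 1 / (real n + 1)" by simp
    show "(\<lambda>n. 1 / (real n + 1)) \<longlonglongrightarrow> 0"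
      using LIMSEQ_inverse_real_of_nat by (simp add: inverse_eq_divide add.commute)
  qed simp
  have "(\<lambda>n. sqrt (norm (r (tau n))^2)) \<longlonglongrightarrow> sqrt 0" by (rule tendsto_real_sqrt[OF rsq])
  then have "(\<lambda>n. norm (r (tau n))) \<longlonglongrightarrow> 0" by simp
  then have "(\<lambda>n. r (tau n)) \<longlonglongrightarrow> 0" by (simp add: tendsto_norm_zero_iff)
  then have "(\<lambda>n. r (tau n) + y) \<longlonglongrightarrow> 0 + y" by (intro tendsto_add tendsto_const)
  then have F1: "(\<lambda>n. F (x (tau n))) \<longlonglongrightarrow> y" by (simp add: r_def)
  have F2: "(\<lambda>n. F (x (tau n))) \<longlonglongrightarrow> F xbar"
    by (rule continuous_on_tendsto_compose[OF c_cont xt])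
      (use xb_ball b_ball invariance tau0 in \<open>auto intro!: always_eventually\<close>)
  have Fx: "F xbar = y" using LIMSEQ_unique[OF F2 F1] .
  define M where "M = thstar + norm \<xi>0 * (3 * \<rho>) + Kc * Dv 0 + (1 + \<eta>) / 4"
  have wc: "weak_conv (\<lambda>n. x (tau n)) xbar" unfolding weak_conv_def
    by (intro allI tendsto_inner xt tendsto_const)
  have "\<Theta> xbar \<le> liminf (\<lambda>n. \<Theta> (x (tau n)))" using a_wlsc wc unfolding weakly_lsc_def by blast
  also have "\<dots> \<le> liminf (\<lambda>n. ereal M)"
  proof (intro Liminf_mono always_eventually allI)
    fix n
    show "\<Theta> (x (tau n)) \<le> ereal M"
      using flow_fin[OF tau0[of n]] th_bound[OF tau0 tau(2)] by (simp add: M_def)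
  qed
  also have "\<dots> = ereal M" by (simp add: Liminf_const)
  finally have "xbar \<in> edom \<Theta>" by (auto simp: edom_def)
  then show ?thesis using xb_ball Fx normlim by blast
qed

end

theorem theorem3p5:
  fixes \<Theta> :: "'x::{real_inner,complete_space} \<Rightarrow> ereal"
    and F :: "'x \<Rightarrow> 'y::{real_inner,complete_space}"
    and DF :: "'x set" and y :: 'y
    and p c0 \<rho> \<eta> C0 :: real and x0 \<xi>0 xstar :: 'x
    and L :: "'x \<Rightarrow> ('x \<Rightarrow>\<^sub>L 'y)"
    and \<xi> x :: "real \<Rightarrow> 'x"
  assumes a_proper: "proper_fun \<Theta>"
    and a_wlsc: "weakly_lsc \<Theta>"
    and a_p: "p > 1" and a_c0: "c0 > 0"
    and a_pconv: "p_convex \<Theta> p c0"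
    and b_rho: "\<rho> > 0"
    and b_xi0: "\<xi>0 \<in> subdiff \<Theta> x0"
    and b_ball: "cball x0 (2 * \<rho>) \<subseteq> DF"
    and b_sol: "xstar \<in> DF" "xstar \<in> edom \<Theta>" "F xstar = y"
    and b_breg: "bregman \<Theta> \<xi>0 xstar x0 \<le> c0 * \<rho> powr p"
    and c_cont: "continuous_on DF F"
    and c_wclosed: "weakly_closed_op DF F"
    and d_Lcont: "continuous_on (cball x0 (2 * \<rho>) \<inter> edom \<Theta>) L"
    and d_eta: "0 \<le> \<eta>" "\<eta> < 1"
    and d_tcc: "\<And>x' xb. x' \<in> cball x0 (2 * \<rho>) \<inter> edom \<Theta> \<Longrightarrow>
                  xb \<in> cball x0 (2 * \<rho>) \<inter> edom \<Theta> \<Longrightarrow>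
                  norm (F x' - F xb - L xb (x' - xb)) \<le> \<eta> * norm (F x' - F xb)"
    and d_C0: "C0 > 0"
    and d_bound: "\<And>x'. x' \<in> cball x0 (2 * \<rho>) \<inter> edom \<Theta> \<Longrightarrow> norm (L x') \<le> C0"
    and flow_init: "\<xi> 0 = \<xi>0" "x 0 = x0"
    and flow_eq: "\<And>t. t \<ge> 0 \<Longrightarrow>
          (\<xi> has_vector_derivative
             (- adjoint (blinfun_apply (L (x t))) (F (x t) - y))) (at t within {0..})"
    and flow_grad: "\<And>t. t \<ge> 0 \<Longrightarrow>
          ((\<lambda>\<zeta>. real_of_ereal (fconj \<Theta> \<zeta>)) has_derivative (\<lambda>h. inner (x t) h)) (at (\<xi> t))"
  shows "\<exists>xbar \<in> cball x0 (2 * \<rho>) \<inter> edom \<Theta>. F xbar = y \<and>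
           ((\<lambda>T. norm (x T - xbar)) \<longlongrightarrow> 0) at_top"
proof -
  interpret flowloc \<Theta> F DF y p c0 \<rho> \<eta> C0 x0 \<xi>0 xstar L \<xi> x
    by (unfold_locales; fact)
  show ?thesis by (rule main_result)
qed

end
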